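(* Let $t$ be the Thue-Morse word. For every occurrence $t(i..j]$ in $t$ of a palindrome of positive length $j-i\notin\{1,3\}$, there is $m\in\{0,1,2,3\}$ such that $i\equiv m \pmod 4$ and $j\equiv 4-m \pmod 4$; equivalently, $i+j\equiv 0 \pmod 4$.
   Context: The Thue-Morse word $t=t[1]t[2]\cdots=abbabaabbaababba\cdots$ is the fixed point starting with $a$ of the morphism $\tau: a\mapsto abba,\ b\mapsto baab$. For $0\le i\le j$, $t(i..j]$ denotes the factor $t[i+1]t[i+2]\cdots t[j]$. A palindrome is a word $p=p[1]\cdots p[n]$ with $p[i]=p[n-i+1]$ for all $i$. *)

theory Defs
  imports Main
begin

datatype letter = a | b

fun tau :: "letter \<Rightarrow> letter list" where
  "tau a = [a, b, b, a]"
| "tau b = [b, a, a, b]"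

definition tau_list :: "letter list \<Rightarrow> letter list" where
  "tau_list w = concat (map tau w)"

definition tm_prefix :: "nat \<Rightarrow> letter list" where
  "tm_prefix k = (tau_list ^^ k) [a]"

text \<open>The Thue-Morse word, 1-indexed: t n = t[n] for n \<ge> 1 (t 0 is a junk value).
  It is the fixed point of tau starting with a, i.e. the limit of tau^k(a).\<close>
definition t :: "nat \<Rightarrow> letter" where
  "t n = tm_prefix n ! (n - 1)"

text \<open>The factor t(i..j] = t[i+1] ... t[j].\<close>
definition factor :: "nat \<Rightarrow> nat \<Rightarrow> letter list" where
  "factor i j = map t [Suc i..<Suc j]"

definition palindrome :: "'x list \<Rightarrow> bool" where
  "palindrome p \<longleftrightarrow> (\<forall>k<length p. p ! k = p ! (length p - 1 - k))"

end

theory Submission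
  imports Defs
begin

fun flip :: "letter \<Rightarrow> letter" where
  "flip a = b" | "flip b = a"

fun u :: "nat \<Rightarrow> letter" where
  "u n = (if n = 0 then a else if even n then u (n div 2) else flip (u (n div 2)))"

declare u.simps[simp del]

lemma u_even: "u (2*n) = u n"
  by (cases "n = 0") (subst u.simps, simp)+

lemma u_odd: "u (2*n+1) = flip (u n)"
  by (subst u.simps) simp

lemma u_odd': "u (Suc (2*n)) = flip (u n)"
  using u_odd by simp

lemma flip_neq: "flip x \<noteq> x" by (cases x) auto
lemma flip_flip: "flip (flip x) = x" by (cases x) auto

lemma u_pair: "u (2*m) \<noteq> u (2*m+1)"
  using flip_neq[of "u m"] by (simp add: u_even u_odd')

lemma no3: assumes "u n = u (n+1)" "u (n+1) = u (n+2)" shows False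
proof (cases "even n")
  case True
  then obtain m where "n = 2*m" by auto
  thus False using assms(1) u_pair by auto
next
  case False
  then obtain m where m: "n = 2*m+1" by (metis oddE)
  have "n+1 = 2*(m+1)" "n+2 = 2*(m+1)+1" using m by auto
  thus False using assms(2) u_pair by metis
qed

lemma len_tau: "length (tau x) = 4" by (cases x) auto

lemma len_tau_list: "length (tau_list w) = 4 * length w"
  unfolding tau_list_def by (induction w) (auto simp: len_tau)

lemma nth_tau_list: "n < 4 * length w \<Longrightarrow> tau_list w ! n = tau (w ! (n div 4)) ! (n mod 4)"
proof (induction w arbitrary: n)
  case Nil thus ?case by simp
next
  case (Cons x w)
  show ?case
  proof (cases "n < 4")
    case True thus ?thesis by (simp add: tau_list_def nth_append len_tau)
  next
    case False
    have "tau_list (x # w) = tau x @ tau_list w" by (simp add: tau_list_def)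
    hence "tau_list (x # w) ! n = tau_list w ! (n - 4)" using False by (simp add: nth_append len_tau)
    also have "\<dots> = tau (w ! ((n-4) div 4)) ! ((n-4) mod 4)" using Cons False by auto
    also have "(n-4) div 4 = n div 4 - 1" using False by presburger
    also have "(n-4) mod 4 = n mod 4" using False by presburger
    moreover have "(x # w) ! (n div 4) = w ! (n div 4 - 1)"
    proof -
      have "n div 4 \<noteq> 0" using False by auto
      thus ?thesis by (simp add: nth_Cons')
    qed
    ultimately show ?thesis by simp
  qed
qed

lemma u_4: "u (4*q + r) = tau (u q) ! r" if "r < 4"
proof -
  have "r = 0 \<or> r = 1 \<or> r = 2 \<or> r = 3" using that by auto
  moreover have "u (4*q) = u q" using u_even[of "2*q"] u_even[of q] by simp
  moreover have "u (4*q+1) = flip (u q)" using u_odd[of "2*q"] u_even[of q] by simp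
  moreover have "u (4*q+2) = flip (u q)" using u_even[of "2*q+1"] u_odd[of q] by simp
  moreover have "u (4*q+3) = u q"
  proof -
    have "u (4*q+3) = u (2*(2*q+1)+1)" by (rule arg_cong[where f=u]) simp
    also have "\<dots> = flip (flip (u q))" by (simp only: u_odd)
    finally show ?thesis by (simp add: flip_flip)
  qed
  ultimately show ?thesis
    by (cases "u q") auto
qed

lemma tm_prefix_len: "length (tm_prefix k) = 4^k"
  by (induction k) (auto simp: tm_prefix_def len_tau_list)

lemma tm_prefix_nth: "n < 4^k \<Longrightarrow> tm_prefix k ! n = u n"
proof (induction k arbitrary: n)
  case 0 thus ?case by (simp add: tm_prefix_def u.simps)
next
  case (Suc k)
  have e: "tm_prefix (Suc k) = tau_list (tm_prefix k)" by (simp add: tm_prefix_def)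
  have "n div 4 < 4^k" using Suc.prems by auto
  hence "tm_prefix (Suc k) ! n = tau (u (n div 4)) ! (n mod 4)"
    using Suc e by (simp add: nth_tau_list tm_prefix_len)
  also have "\<dots> = u n" using u_4[of "n mod 4" "n div 4"] by simp
  finally show ?case .
qed

lemma t_u: "t (Suc m) = u m"
proof -
  have "m < 4 ^ Suc m"
  proof -
    have "m < 2 ^ m" by (rule less_exp)
    also have "2 ^ m \<le> (4::nat) ^ m" by (rule power_mono) auto
    also have "\<dots> \<le> 4 ^ Suc m" by simp
    finally show ?thesis .
  qed
  thus ?thesis by (simp add: t_def tm_prefix_nth)
qed

lemma l4: fixes x y :: nat assumes "x < 4" "y < 4" "(x+y) mod 4 = 0" shows "y = (4-x) mod 4"
proof -
  have "x = 0 \<or> x = 1 \<or> x = 2 \<or> x = 3" using assms(1) by linarith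
  moreover have "y = 0 \<or> y = 1 \<or> y = 2 \<or> y = 3" using assms(2) by linarith
  ultimately show ?thesis using assms(3) by (elim disjE) simp_all
qed

theorem proposition5:
  fixes i j :: nat
  assumes "i < j"
    and "j - i \<notin> {1, 3}"
    and "palindrome (factor i j)"
  shows "\<exists>m \<in> {0,1,2,3::nat}. i mod 4 = m \<and> j mod 4 = (4 - m) mod 4"
proof -
  define L where "L = j - i"
  have len: "length (factor i j) = L" using assms(1) by (simp add: factor_def L_def)
  have nth: "k < L \<Longrightarrow> factor i j ! k = u (i + k)" for k
    using assms(1) by (simp del: upt_Suc add: factor_def L_def t_u)
  have pal: "k < L \<Longrightarrow> u (i + k) = u (i + (L - 1 - k))" for k
    using assms(3) len nth unfolding palindrome_def
  proof -
    assume k: "k < L"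
    have kl: "k < length (factor i j)" using len k by simp
    have "factor i j ! k = factor i j ! (length (factor i j) - 1 - k)"
      using assms(3) kl unfolding palindrome_def by blast
    hence "factor i j ! k = factor i j ! (L - 1 - k)" by (simp only: len)
    moreover have "L - 1 - k < L" using k by auto
    ultimately show ?thesis using nth k by simp
  qed
  show ?thesis
  proof (cases "even L")
    case True
    then obtain h where h: "L = 2*h" by auto
    have "h \<ge> 1" using h assms(1) L_def by auto
    have "L - 1 - (h-1) = h" using h \<open>h \<ge> 1\<close> by auto
    hence "u (i + (h-1)) = u (i + h)" using pal[of "h-1"] h \<open>h \<ge> 1\<close> by auto
    hence "even (i + h)"
    proof -
      assume eq: "u (i + (h-1)) = u (i + h)"
      show "even (i+h)"
      proof (rule ccontr)
        assume "odd (i+h)"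
        then obtain m where "i + h = 2*m+1" by (metis oddE)
        hence "i + (h-1) = 2*m" using \<open>h \<ge> 1\<close> by auto
        thus False using eq u_pair[of m] \<open>i + h = 2*m+1\<close> by simp
      qed
    qed
    then obtain q where q: "i + h = 2*q" by (rule evenE)
    have "j = i + 2*h" using h L_def assms(1) by simp
    hence "i + j = 4*q" using q by simp
    hence ij: "(i mod 4 + j mod 4) mod 4 = 0" by (metis mod_add_eq mod_mult_self1_is_0)
    have "i mod 4 < 4" "j mod 4 < 4" by auto
    hence jm: "j mod 4 = (4 - i mod 4) mod 4" by (rule l4[OF _ _ ij])
    have im: "i mod 4 \<in> {0,1,2,3::nat}"
    proof -
      have "i mod 4 < 4" by simp
      hence "i mod 4 = 0 \<or> i mod 4 = 1 \<or> i mod 4 = 2 \<or> i mod 4 = 3" by linarith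
      thus ?thesis by simp
    qed
    show ?thesis
    proof (rule bexI[where x="i mod 4"])
      show "i mod 4 = i mod 4 \<and> j mod 4 = (4 - i mod 4) mod 4" using jm by simp
      show "i mod 4 \<in> {0,1,2,3::nat}" by (rule im)
    qed
  next
    case False
    then obtain h where h: "L = 2*h+1" by (rule oddE)
    have "L \<noteq> 1" "L \<noteq> 3" using assms(2) unfolding L_def by auto
    hence "h \<ge> 2" using h by presburger
    define c where "c = i + h"
    have x1: "L - 1 - (h-1) = h+1" "i + (h-1) = c-1" "i+(h+1) = c+1" "h - 1 < L"
      using h \<open>h \<ge> 2\<close> c_def by auto
    have "u (i + (h-1)) = u (i + (L - 1 - (h-1)))" using pal[of "h-1"] x1(4) by blast
    hence e1: "u (c-1) = u (c+1)" by (simp only: x1)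
    have x2: "L - 1 - (h-2) = h+2" "i + (h-2) = c-2" "i+(h+2) = c+2" "h - 2 < L"
      using h \<open>h \<ge> 2\<close> c_def by auto
    have "u (i + (h-2)) = u (i + (L - 1 - (h-2)))" using pal[of "h-2"] x2(4) by blast
    hence e2: "u (c-2) = u (c+2)" by (simp only: x2)
    have "c \<ge> 2" using \<open>h \<ge> 2\<close> c_def by auto
    show ?thesis
    proof (cases "even c")
      case True
      then obtain n where n: "c = 2*n" by auto
      have "n \<ge> 1" using n \<open>c \<ge> 2\<close> by auto
      have a1: "c - 2 = 2*(n-1)" "c - 1 = 2*(n-1)+1" "c+1 = 2*n+1" "c+2 = 2*(n+1)"
        using n \<open>n \<ge> 1\<close> by auto
      have "flip (u (n-1)) = flip (u n)" using e1 unfolding a1 u_odd .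
      hence "u (n-1) = u n" using flip_flip by metis
      moreover have "u (n-1) = u (n+1)" using e2 unfolding a1 u_even .
      ultimately show ?thesis using no3[of "n-1"] \<open>n \<ge> 1\<close> by simp
    next
      case False
      then obtain n where n: "c = 2*n+1" by (metis oddE)
      have "n \<ge> 1" using n \<open>c \<ge> 2\<close> by auto
      have a1: "c - 2 = 2*(n-1)+1" "c - 1 = 2*n" "c+1 = 2*(n+1)" "c+2 = 2*(n+1)+1"
        using n \<open>n \<ge> 1\<close> by auto
      have "u n = u (n+1)" using e1 unfolding a1 u_even .
      moreover have "flip (u (n-1)) = flip (u (n+1))" using e2 unfolding a1 u_odd .
      hence "u (n-1) = u (n+1)" using flip_flip by metis
      ultimately show ?thesis using no3[of "n-1"] \<open>n \<ge> 1\<close> by simp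
    qed
  qed
qed

end
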